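(* Let $S$ be a discrete random variable (the hidden hypothesis) with finite domain $\mathrm{dom}(S)$. Let $O_1,\dots,O_N$ be random variables with finite discrete domains (the observations), and let $O^1,\dots,O^K$ ($K\ge 0$) be further observation random variables (the past observations), each with a finite discrete domain. Assume that all of $O_1,\dots,O_N,O^1,\dots,O^K$ are mutually conditionally independent given $S$. Assume the uniform observation entropy (UOE) property: for every $s\in\mathrm{dom}(S)$ with $P(S=s)>0$ and all $i,j\in\{1,\dots,N\}$, $$H(O_i\mid S=s)=H(O_j\mid S=s).$$ Fix values $o^1,\dots,o^K$ such that the event $O^{-}:=\{O^1=o^1,\dots,O^K=o^K\}$ has positive probability. Then the set of maximizers of $I(S,O'\mid O^{-})$ over $O'\in\{O_1,\dots,O_N\}$ equals the set of maximizers of $H(O'\mid O^{-})$ over $O'\in\{O_1,\dots,O_N\}$, that is, $$\operatorname{argmax}_{O'\in\{O_1,\dots,O_N\}} I(S,O'\mid O^{-})=\operatorname{argmax}_{O'\in\{O_1,\dots,O_N\}} H(O'\mid O^{-}).$$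
   Context: All information-theoretic quantities conditioned on the event $O^{-}$ are computed under the probability measure conditioned on $O^{-}$. In particular: - $H(O'\mid O^{-})$ is the entropy of $O'$ under $P(\cdot\mid O^{-})$; - $H(O'\mid S,O^{-})=\sum_s P(S=s\mid O^{-})\,H(O'\mid S=s,O^{-})$; - $I(S,O'\mid O^{-})$ is the mutual information between $S$ and $O'$ under $P(\cdot\mid O^{-})$. The generative model is: $s\sim P(S)$, and given $S=s$ each observation $o_i\sim P(O_i\mid S=s)$. *)

theory Defs
  imports "HOL-Probability.Probability"
begin

text \<open>Generative model: s ~ prior; given S = s, the current observation O_i
  has distribution lik i s (i in 1..N) and the past observation O^k has
  distribution plik k s (k < K), all mutually conditionally independent given S.
  The value of the past observation O^k is obs k.\<close>

definition ent :: "('a::finite \<Rightarrow> real) \<Rightarrow> real" where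
  "ent f = - (\<Sum>x\<in>UNIV. f x * log 2 (f x))"

text \<open>P(S = s, O_i = o, O^-): marginal of the conditionally independent joint.\<close>
definition joint_SOE ::
  "'s pmf \<Rightarrow> (nat \<Rightarrow> 's \<Rightarrow> 'o pmf) \<Rightarrow> (nat \<Rightarrow> 's \<Rightarrow> 'q pmf) \<Rightarrow> nat \<Rightarrow> (nat \<Rightarrow> 'q)
    \<Rightarrow> nat \<Rightarrow> 's \<Rightarrow> 'o \<Rightarrow> real" where
  "joint_SOE prior lik plik K obs i s x =
     pmf prior s * pmf (lik i s) x * (\<Prod>k<K. pmf (plik k s) (obs k))"

definition prob_E :: "'s::finite pmf \<Rightarrow> (nat \<Rightarrow> 's \<Rightarrow> 'q pmf) \<Rightarrow> nat \<Rightarrow> (nat \<Rightarrow> 'q) \<Rightarrow> real" where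
  "prob_E prior plik K obs = (\<Sum>s\<in>UNIV. pmf prior s * (\<Prod>k<K. pmf (plik k s) (obs k)))"

definition cjoint ::
  "'s::finite pmf \<Rightarrow> (nat \<Rightarrow> 's \<Rightarrow> 'o pmf) \<Rightarrow> (nat \<Rightarrow> 's \<Rightarrow> 'q pmf) \<Rightarrow> nat \<Rightarrow> (nat \<Rightarrow> 'q)
    \<Rightarrow> nat \<Rightarrow> 's \<Rightarrow> 'o \<Rightarrow> real" where
  "cjoint prior lik plik K obs i s x =
     joint_SOE prior lik plik K obs i s x / prob_E prior plik K obs"

definition cS ::
  "'s::finite pmf \<Rightarrow> (nat \<Rightarrow> 's \<Rightarrow> 'o::finite pmf) \<Rightarrow> (nat \<Rightarrow> 's \<Rightarrow> 'q pmf) \<Rightarrow> nat \<Rightarrow> (nat \<Rightarrow> 'q)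
    \<Rightarrow> nat \<Rightarrow> 's \<Rightarrow> real" where
  "cS prior lik plik K obs i s = (\<Sum>x\<in>UNIV. cjoint prior lik plik K obs i s x)"

definition cO ::
  "'s::finite pmf \<Rightarrow> (nat \<Rightarrow> 's \<Rightarrow> 'o::finite pmf) \<Rightarrow> (nat \<Rightarrow> 's \<Rightarrow> 'q pmf) \<Rightarrow> nat \<Rightarrow> (nat \<Rightarrow> 'q)
    \<Rightarrow> nat \<Rightarrow> 'o \<Rightarrow> real" where
  "cO prior lik plik K obs i x = (\<Sum>s\<in>UNIV. cjoint prior lik plik K obs i s x)"

definition cond_ent_O ::
  "'s::finite pmf \<Rightarrow> (nat \<Rightarrow> 's \<Rightarrow> 'o::finite pmf) \<Rightarrow> (nat \<Rightarrow> 's \<Rightarrow> 'q pmf) \<Rightarrow> nat \<Rightarrow> (nat \<Rightarrow> 'q)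
    \<Rightarrow> nat \<Rightarrow> real" where
  "cond_ent_O prior lik plik K obs i = ent (cO prior lik plik K obs i)"

definition cond_MI ::
  "'s::finite pmf \<Rightarrow> (nat \<Rightarrow> 's \<Rightarrow> 'o::finite pmf) \<Rightarrow> (nat \<Rightarrow> 's \<Rightarrow> 'q pmf) \<Rightarrow> nat \<Rightarrow> (nat \<Rightarrow> 'q)
    \<Rightarrow> nat \<Rightarrow> real" where
  "cond_MI prior lik plik K obs i =
     (\<Sum>s\<in>UNIV. \<Sum>x\<in>UNIV. cjoint prior lik plik K obs i s x *
        log 2 (cjoint prior lik plik K obs i s x /
               (cS prior lik plik K obs i s * cO prior lik plik K obs i x)))"

definition argmax_set :: "('a \<Rightarrow> real) \<Rightarrow> 'a set \<Rightarrow> 'a set" where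
  "argmax_set f A = {x \<in> A. \<forall>y\<in>A. f y \<le> f x}"

end

theory Submission
  imports Defs
begin

theorem theorem1:
  fixes prior :: "'s::finite pmf"
    and lik :: "nat \<Rightarrow> 's \<Rightarrow> 'o::finite pmf"
    and plik :: "nat \<Rightarrow> 's \<Rightarrow> 'q::finite pmf"
    and obs :: "nat \<Rightarrow> 'q"
    and N K :: nat
  assumes UOE: "\<And>s i j. pmf prior s > 0 \<Longrightarrow> i \<in> {1..N} \<Longrightarrow> j \<in> {1..N} \<Longrightarrow>
                  ent (pmf (lik i s)) = ent (pmf (lik j s))"
    and pos: "prob_E prior plik K obs > 0"
  shows "argmax_set (cond_MI prior lik plik K obs) {1..N} =
         argmax_set (cond_ent_O prior lik plik K obs) {1..N}"
proof -
  define P where "P = prob_E prior plik K obs"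
  define w where "w s = pmf prior s * (\<Prod>k<K. pmf (plik k s) (obs k)) / P" for s
  have w0: "w s \<ge> 0" for s using pos unfolding w_def P_def
    by (intro divide_nonneg_pos mult_nonneg_nonneg prod_nonneg) auto
  have wpos: "w s > 0 \<Longrightarrow> pmf prior s > 0" for s
    unfolding w_def using pmf_nonneg[of prior s] by (cases "pmf prior s = 0") auto
  have cj: "cjoint prior lik plik K obs i s x = w s * pmf (lik i s) x" for i s x
    unfolding cjoint_def joint_SOE_def w_def P_def by simp
  have cSw: "cS prior lik plik K obs i s = w s" for i s
  proof -
    have "cS prior lik plik K obs i s = w s * (\<Sum>x\<in>UNIV. pmf (lik i s) x)"
      unfolding cS_def cj by (simp add: sum_distrib_left)
    also have "(\<Sum>x\<in>UNIV. pmf (lik i s) x) = 1"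
      using sum_pmf_eq_1[of UNIV "lik i s"] by simp
    finally show ?thesis by simp
  qed
  define H where "H i = (\<Sum>s\<in>UNIV. w s * ent (pmf (lik i s)))" for i
  have MI: "cond_MI prior lik plik K obs i = cond_ent_O prior lik plik K obs i - H i" for i
  proof -
    let ?c = "cjoint prior lik plik K obs i"
    let ?O = "cO prior lik plik K obs i"
    have trm: "?c s x * log 2 (?c s x / (cS prior lik plik K obs i s * ?O x))
        = w s * (pmf (lik i s) x * log 2 (pmf (lik i s) x)) - ?c s x * log 2 (?O x)" for s x
    proof (cases "?c s x = 0")
      case True
      then show ?thesis unfolding cj by auto
    next
      case False
      have cnn: "?c s' x \<ge> 0" for s' unfolding cj using w0 by simp
      hence cp: "?c s x > 0" using False cnn[of s] by linarith
      have "?c s x \<le> ?O x" unfolding cO_def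
        by (rule member_le_sum) (use cnn in auto)
      hence Op: "?O x > 0" using cp by simp
      have wp: "w s > 0" and pp: "pmf (lik i s) x > 0"
        using cp w0 unfolding cj by (auto simp: zero_less_mult_iff)
      have "?c s x / (cS prior lik plik K obs i s * ?O x) = pmf (lik i s) x / ?O x"
        unfolding cSw cj using wp by simp
      hence L: "log 2 (?c s x / (cS prior lik plik K obs i s * ?O x))
           = log 2 (pmf (lik i s) x) - log 2 (?O x)"
        using pp Op by (simp add: log_divide)
      show ?thesis unfolding L unfolding cj by (simp add: algebra_simps)
    qed
    have "cond_MI prior lik plik K obs i
        = (\<Sum>s\<in>UNIV. \<Sum>x\<in>UNIV. w s * (pmf (lik i s) x * log 2 (pmf (lik i s) x)) - ?c s x * log 2 (?O x))"
      unfolding cond_MI_def trm by simp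
    also have "\<dots> = (\<Sum>s\<in>UNIV. w s * (\<Sum>x\<in>UNIV. pmf (lik i s) x * log 2 (pmf (lik i s) x)))
                    - (\<Sum>s\<in>UNIV. \<Sum>x\<in>UNIV. ?c s x * log 2 (?O x))"
      by (simp add: sum_subtractf sum_distrib_left)
    also have "(\<Sum>s\<in>UNIV. \<Sum>x\<in>UNIV. ?c s x * log 2 (?O x)) = (\<Sum>x\<in>UNIV. ?O x * log 2 (?O x))"
      by (subst sum.swap) (simp add: cO_def sum_distrib_right)
    also have "(\<Sum>s\<in>UNIV. w s * (\<Sum>x\<in>UNIV. pmf (lik i s) x * log 2 (pmf (lik i s) x))) = - H i"
      unfolding H_def ent_def by (simp add: sum_negf)
    finally show ?thesis unfolding cond_ent_O_def ent_def by simp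
  qed
  have Heq: "H i = H j" if "i \<in> {1..N}" "j \<in> {1..N}" for i j
    unfolding H_def
  proof (rule sum.cong[OF refl])
    fix s
    show "w s * ent (pmf (lik i s)) = w s * ent (pmf (lik j s))"
    proof (cases "w s = 0")
      case False
      hence "w s > 0" using w0[of s] by simp
      thus ?thesis using UOE[OF wpos that] by auto
    qed simp
  qed
  have key: "(cond_MI prior lik plik K obs j \<le> cond_MI prior lik plik K obs i) \<longleftrightarrow>
     (cond_ent_O prior lik plik K obs j \<le> cond_ent_O prior lik plik K obs i)"
    if "i \<in> {1..N}" "j \<in> {1..N}" for i j
    unfolding MI using Heq[OF that] by simp
  show ?thesis unfolding argmax_set_def using key by blast
qed

end
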